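(* Let $\{X_i\}_{i\ge1}$ be independent, identically distributed random variables on $((0,1),\mathcal{B},\mathcal{L})$, each exponentially distributed with rate $1$. For $t\ge1$ let $[t]_E=2k$ if $2k-1\le t<2k+1$, $k\in\mathbb{N}$. Define $D_1=[\exp(X_1)]_E$ and $D_{n+1}=\left[\frac{(D_n-1)(D_n+1)}{D_n}\exp(X_{n+1})\right]_E$ for $n\in\mathbb{N}$. Then $\{D_n\}_{n\ge1}$ is a time-homogeneous Markov chain with $\mathcal{L}(D_1=2k)=\frac{2}{(2k-1)(2k+1)}$ for $k\in\mathbb{N}$ and, for $k,l\in\mathbb{N}$ with $l\ge k$, $$\mathcal{L}(D_{n+1}=2l\mid D_n=2k)=\begin{cases}\frac{1}{2k},& l=k,\\ \frac{(2k-1)(2k+1)}{k(2l-1)(2l+1)},& l\ge k+1.\end{cases}$$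
   Context: $\mathcal{B}$ denotes the Borel $\sigma$-algebra of $(0,1)$ and $\mathcal{L}$ Lebesgue measure. *)

theory Defs
  imports "HOL-Probability.Probability"
begin

definition unit_interval_space :: "real measure" where
  "unit_interval_space = restrict_space lborel {0<..<1}"

text \<open>[t]_E = 2k if 2k-1 <= t < 2k+1 (intended for t >= 1, where k >= 1).\<close>
definition even_round :: "real \<Rightarrow> real" where
  "even_round t = 2 * of_int \<lfloor>(t + 1) / 2\<rfloor>"

text \<open>The chain D_n, n >= 1 (the value at index 0 is irrelevant).\<close>
fun Dseq :: "(nat \<Rightarrow> 'a \<Rightarrow> real) \<Rightarrow> nat \<Rightarrow> 'a \<Rightarrow> real" where
  "Dseq X 0 \<omega> = 0"
| "Dseq X (Suc 0) \<omega> = even_round (exp (X 1 \<omega>))"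
| "Dseq X (Suc (Suc n)) \<omega> =
     even_round ((Dseq X (Suc n) \<omega> - 1) * (Dseq X (Suc n) \<omega> + 1) / Dseq X (Suc n) \<omega>
                 * exp (X (Suc (Suc n)) \<omega>))"

definition cprob :: "'a measure \<Rightarrow> 'a set \<Rightarrow> 'a set \<Rightarrow> real" where
  "cprob M A B = measure M (A \<inter> B) / measure M B"

definition event_eq :: "'a measure \<Rightarrow> ('a \<Rightarrow> real) \<Rightarrow> real \<Rightarrow> 'a set" where
  "event_eq M Y a = {\<omega> \<in> space M. Y \<omega> = a}"

definition time_homogeneous_markov_chain :: "'a measure \<Rightarrow> (nat \<Rightarrow> 'a \<Rightarrow> real) \<Rightarrow> bool" where
  "time_homogeneous_markov_chain M D \<longleftrightarrow>
     (\<forall>n\<ge>1. D n \<in> borel_measurable M) \<and>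
     (\<forall>n\<ge>1. \<forall>s :: nat \<Rightarrow> real.
        measure M {\<omega> \<in> space M. \<forall>i\<in>{1..n}. D i \<omega> = s i} > 0 \<longrightarrow>
        cprob M (event_eq M (D (Suc n)) (s (Suc n))) {\<omega> \<in> space M. \<forall>i\<in>{1..n}. D i \<omega> = s i}
        = cprob M (event_eq M (D (Suc n)) (s (Suc n))) (event_eq M (D n) (s n))) \<and>
     (\<exists>P :: real \<Rightarrow> real \<Rightarrow> real. \<forall>n\<ge>1. \<forall>a b.
        measure M (event_eq M (D n) a) > 0 \<longrightarrow>
        cprob M (event_eq M (D (Suc n)) b) (event_eq M (D n) a) = P a b)"

end

theory Submission
  imports Defs
begin

lemma even_round_eq: "even_round t = 2 * real_of_int l \<longleftrightarrow> 2*l - 1 \<le> t \<and> t < 2*l+1"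
proof -
  have "even_round t = 2 * real_of_int l \<longleftrightarrow> \<lfloor>(t + 1) / 2\<rfloor> = l"
    unfolding even_round_def by simp
  also have "\<dots> \<longleftrightarrow> 2*l - 1 \<le> t \<and> t < 2*l+1"
    by (simp add: floor_eq_iff field_simps)
  finally show ?thesis .
qed

lemma measurable_even_round[measurable]: "even_round \<in> borel_measurable borel"
  unfolding even_round_def by measurable

lemma Dseq_cong: "(\<forall>j\<in>{1..n}. X j \<omega> = Y j \<omega>') \<Longrightarrow> Dseq X n \<omega> = Dseq Y n \<omega>'"
  by (induction X n \<omega> rule: Dseq.induct) auto

definition Fv :: "nat \<Rightarrow> (nat \<Rightarrow> real) \<Rightarrow> real" where
  "Fv n x = Dseq (\<lambda>i (_::unit). x i) n ()"

lemma Dseq_Fv: "j \<le> n \<Longrightarrow> Dseq X j \<omega> = Fv j (restrict (\<lambda>i. X i \<omega>) {1..n})"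
  unfolding Fv_def by (rule Dseq_cong) auto

lemma Fv_simps: "Fv 0 x = 0" "Fv (Suc 0) x = even_round (exp (x 1))"
  "Fv (Suc (Suc m)) x = even_round ((Fv (Suc m) x - 1) * (Fv (Suc m) x + 1) / Fv (Suc m) x * exp (x (Suc (Suc m))))"
  by (simp_all add: Fv_def)

lemma Fv_meas: "{1..n} \<subseteq> I \<Longrightarrow> Fv n \<in> borel_measurable (PiM I (\<lambda>_. borel))"
proof (induction n)
  case 0
  then show ?case by (simp add: Fv_simps)
next
  case (Suc n)
  show ?case
  proof (cases n)
    case 0
    then have "1 \<in> I" using Suc.prems by auto
    then show ?thesis using 0 by (simp add: Fv_simps) measurable
  next
    case (Suc m)
    then have I: "Suc (Suc m) \<in> I" "{1..Suc m} \<subseteq> I" using Suc.prems by auto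
    have [measurable]: "Fv (Suc m) \<in> borel_measurable (PiM I (\<lambda>_. borel))"
      using Suc.IH I Suc by auto
    show ?thesis using Suc I by (simp add: Fv_simps) measurable
  qed
qed

lemma prob_space_U: "prob_space unit_interval_space"
  unfolding unit_interval_space_def by (rule prob_space_restrict_space) auto


definition qtr :: "real \<Rightarrow> real \<Rightarrow> real" where
  "qtr a b = measure (density lborel (exponential_density 1))
     {x. even_round ((a - 1) * (a + 1) / a * exp x) = b}"

lemma qset_borel[measurable]: "{x::real. even_round (c * exp x) = b} \<in> sets borel"
  by measurable

abbreviation "mu \<equiv> density lborel (exponential_density 1)"

lemma mu_prob: "prob_space mu"
  by (rule prob_space_exponential_density) simp

lemma mu_le: "measure mu {..t} = (if 0 \<le> t then 1 - exp (- t) else 0)"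
proof -
  have "emeasure mu {..t} = ennreal (erlang_CDF 0 1 t)"
    by (rule emeasure_erlang_density) simp
  then have "measure mu {..t} = erlang_CDF 0 1 t"
    by (simp add: measure_def)
  then show ?thesis by (simp add: erlang_CDF_0)
qed

lemma mu_pt: "measure mu {t} = 0"
proof -
  have "emeasure mu {t} = 0"
    by (simp add: emeasure_density)
  then show ?thesis by (simp add: measure_def)
qed

lemma mu_lt: "measure mu {..<t} = (if 0 \<le> t then 1 - exp (- t) else 0)"
proof -
  interpret P: prob_space mu by (rule mu_prob)
  have "{..<t} = {..t} - {t}" by auto
  then have "measure mu {..<t} = measure mu {..t} - measure mu {t}"
    by (simp add: P.finite_measure_Diff)
  then show ?thesis by (simp add: mu_le mu_pt)
qed

definition Phi :: "real \<Rightarrow> real" where "Phi y = (if 1 \<le> y then 1 - 1 / y else 0)"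

lemma mu_lt_ln: "y > 0 \<Longrightarrow> measure mu {..<ln y} = Phi y"
  by (simp add: mu_lt Phi_def exp_minus ln_ge_zero_iff inverse_eq_divide)

lemma mu_window:
  assumes c: "c > 0" and u: "u > 0" and uv: "u \<le> v"
  shows "measure mu {x. u \<le> c * exp x \<and> c * exp x < v} = Phi (v / c) - Phi (u / c)"
proof -
  interpret P: prob_space mu by (rule mu_prob)
  have v: "v > 0" using u uv by simp
  have e1: "u \<le> c * exp x \<longleftrightarrow> ln (u / c) \<le> x" for x
  proof -
    have "u \<le> c * exp x \<longleftrightarrow> u / c \<le> exp x" using c by (simp add: field_simps)
    also have "\<dots> \<longleftrightarrow> ln (u / c) \<le> x" using u c by (metis ln_exp ln_le_cancel_iff divide_pos_pos exp_gt_zero)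
    finally show ?thesis .
  qed
  have e2: "c * exp x < v \<longleftrightarrow> x < ln (v / c)" for x
  proof -
    have "c * exp x < v \<longleftrightarrow> exp x < v / c" using c by (simp add: field_simps)
    also have "\<dots> \<longleftrightarrow> x < ln (v / c)" using v c by (metis ln_exp ln_less_cancel_iff divide_pos_pos exp_gt_zero)
    finally show ?thesis .
  qed
  have le: "ln (u / c) \<le> ln (v / c)" using u uv c by (simp add: divide_right_mono)
  have seq: "{x. u \<le> c * exp x \<and> c * exp x < v} = {..<ln (v / c)} - {..<ln (u / c)}"
    using e1 e2 by auto
  have "measure mu ({..<ln (v / c)} - {..<ln (u / c)}) = measure mu {..<ln (v / c)} - measure mu {..<ln (u / c)}"
    using le by (intro P.finite_measure_Diff) auto
  then have "measure mu {x. u \<le> c * exp x \<and> c * exp x < v} = measure mu {..<ln (v / c)} - measure mu {..<ln (u / c)}"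
    unfolding seq .
  then show ?thesis using u v c by (simp add: mu_lt_ln)
qed

lemma even_round_eq_nat: "even_round t = 2 * real k \<longleftrightarrow> 2 * real k - 1 \<le> t \<and> t < 2 * real k + 1"
  using even_round_eq[of t "int k"] by simp

lemma first_prob:
  assumes k: "k \<ge> 1"
  shows "measure mu {x. even_round (exp x) = 2 * real k} = 2 / ((2 * real k - 1) * (2 * real k + 1))"
proof -
  have "measure mu {x. even_round (exp x) = 2 * real k}
    = measure mu {x. 2 * real k - 1 \<le> 1 * exp x \<and> 1 * exp x < 2 * real k + 1}"
    by (simp add: even_round_eq_nat)
  also have "\<dots> = Phi (2 * real k + 1) - Phi (2 * real k - 1)"
    using k by (subst mu_window) auto
  also have "\<dots> = 2 / ((2 * real k - 1) * (2 * real k + 1))"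
    using k by (simp add: Phi_def field_simps)
  finally show ?thesis .
qed

lemma qtr_val:
  assumes k: "k \<ge> 1" and lk: "l \<ge> k"
  shows "qtr (2 * real k) (2 * real l) = (if l = k then 1 / (2 * real k)
      else (2 * real k - 1) * (2 * real k + 1) / (real k * (2 * real l - 1) * (2 * real l + 1)))"
proof -
  define c where "c = (2 * real k - 1) * (2 * real k + 1) / (2 * real k)"
  have c: "c > 0" using k by (simp add: c_def)
  have l: "l \<ge> 1" using k lk by simp
  have "qtr (2 * real k) (2 * real l) = measure mu {x. 2 * real l - 1 \<le> c * exp x \<and> c * exp x < 2 * real l + 1}"
    unfolding qtr_def c_def by (simp add: even_round_eq_nat)
  also have "\<dots> = Phi ((2 * real l + 1) / c) - Phi ((2 * real l - 1) / c)"
    using c l by (subst mu_window) auto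
  also have "\<dots> = (if l = k then 1 / (2 * real k)
      else (2 * real k - 1) * (2 * real k + 1) / (real k * (2 * real l - 1) * (2 * real l + 1)))"
  proof (cases "l = k")
    case True
    have "c \<le> 2 * real l + 1" using k True unfolding c_def by (simp add: divide_le_eq algebra_simps)
    then have a: "1 \<le> (2 * real l + 1) / c" using c by (simp add: le_divide_eq)
    have "2 * real l - 1 < c" using k True unfolding c_def by (simp add: less_divide_eq algebra_simps)
    then have b: "\<not> 1 \<le> (2 * real l - 1) / c" using c by (simp add: le_divide_eq)
    have p: "2 * real k - 1 > 0" "2 * real k + 1 > 0" "real k > 0" using k by auto
    have e: "1 - 1 / ((2 * real l + 1) / c) = 1 / (2 * real k)"
    proof -
      have "(2 * real l + 1) / c = 2 * real k / (2 * real k - 1)"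
        unfolding c_def True using p by (simp add: divide_simps)
      moreover have "1 - 1 / (2 * real k / (2 * real k - 1)) = 1 / (2 * real k)"
        using p by (simp add: divide_simps)
      ultimately show ?thesis by simp
    qed
    show ?thesis using a b True e by (simp add: Phi_def)
  next
    case False
    then have lk1: "real l \<ge> real k + 1" using lk by simp
    have "c \<le> 2 * real k + 1" using k unfolding c_def by (simp add: divide_le_eq algebra_simps)
    then have "c \<le> 2 * real l - 1" using lk1 by linarith
    then have b: "1 \<le> (2 * real l - 1) / c" using c by (simp add: le_divide_eq)
    then have a: "1 \<le> (2 * real l + 1) / c" using c by (simp add: le_divide_eq)
    have p: "2 * real k - 1 \<noteq> 0" "2 * real l + 1 \<noteq> 0" "2 * real l - 1 \<noteq> 0" "real k \<noteq> 0"
      using k l by auto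
    have e: "(1 - 1 / ((2 * real l + 1) / c)) - (1 - 1 / ((2 * real l - 1) / c))
      = c / (2 * real l - 1) - c / (2 * real l + 1)" by simp
    also have "\<dots> = (2 * real k - 1) * (2 * real k + 1) / (real k * (2 * real l - 1) * (2 * real l + 1))"
      unfolding c_def using p by (simp add: divide_simps) (simp add: algebra_simps)
    finally show ?thesis using a b False by (simp add: Phi_def)
  qed
  finally show ?thesis .
qed

context
  fixes X :: "nat \<Rightarrow> real \<Rightarrow> real"
  assumes indep: "prob_space.indep_vars unit_interval_space (\<lambda>_. borel) X {1..}"
    and expo: "\<And>i. i \<ge> 1 \<Longrightarrow> distributed unit_interval_space lborel (X i) (exponential_density 1)"
begin

interpretation U: prob_space unit_interval_space by (rule prob_space_U)

lemma Xmeas[measurable]: "i \<ge> 1 \<Longrightarrow> X i \<in> borel_measurable unit_interval_space"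
  using distributed_measurable[OF expo] by simp

lemma Vmeas: "(\<lambda>\<omega>. restrict (\<lambda>i. X i \<omega>) {1..n}) \<in> measurable unit_interval_space (PiM {1..n} (\<lambda>_. borel))"
  by (rule measurable_restrict) auto

lemma Dmeas: "Dseq X n \<in> borel_measurable unit_interval_space"
proof -
  have "Dseq X n = (\<lambda>\<omega>. Fv n (restrict (\<lambda>i. X i \<omega>) {1..n}))"
    using Dseq_Fv[of n n X] by auto
  also have "\<dots> \<in> borel_measurable unit_interval_space"
    by (rule measurable_compose[OF Vmeas Fv_meas]) auto
  finally show ?thesis .
qed

lemma indep_key:
  assumes S: "S \<in> sets (PiM {1..n} (\<lambda>_. borel))" and B: "B \<in> sets borel"
  shows "U.prob {\<omega>\<in>space unit_interval_space. restrict (\<lambda>i. X i \<omega>) {1..n} \<in> S \<and> X (Suc n) \<omega> \<in> B}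
    = U.prob {\<omega>\<in>space unit_interval_space. restrict (\<lambda>i. X i \<omega>) {1..n} \<in> S}
      * U.prob {\<omega>\<in>space unit_interval_space. X (Suc n) \<omega> \<in> B}"
proof -
  have iv: "U.indep_var (PiM {1..n} (\<lambda>_. borel)) (\<lambda>\<omega>. restrict (\<lambda>i. X i \<omega>) {1..n})
     (PiM {Suc n} (\<lambda>_. borel)) (\<lambda>\<omega>. restrict (\<lambda>i. X i \<omega>) {Suc n})"
    by (rule U.indep_var_restrict[OF indep]) auto
  have B': "{f \<in> space (PiM {Suc n} (\<lambda>_. borel)). f (Suc n) \<in> B} \<in> sets (PiM {Suc n} (\<lambda>_. borel))"
    using B by measurable
  from U.indep_varD[OF iv S B'] show ?thesis
    by (simp add: vimage_def Int_def conj_commute space_PiM)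
qed

lemma probX:
  assumes "i \<ge> 1" "B \<in> sets borel"
  shows "U.prob {\<omega>\<in>space unit_interval_space. X i \<omega> \<in> B} = measure (density lborel (exponential_density 1)) B"
proof -
  have "distr unit_interval_space lborel (X i) = density lborel (exponential_density 1)"
    using distributed_distr_eq_density[OF expo[OF assms(1)]] .
  then have "measure (density lborel (exponential_density 1)) B = measure (distr unit_interval_space lborel (X i)) B"
    by simp
  also have "\<dots> = U.prob (X i -` B \<inter> space unit_interval_space)"
    using assms by (intro measure_distr) auto
  finally show ?thesis by (simp add: vimage_def Int_def conj_commute)
qed

lemma trans_step:
  assumes n: "n \<ge> 1" and S: "S \<in> sets (PiM {1..n} (\<lambda>_. borel))"
    and A: "A = {\<omega>\<in>space unit_interval_space. restrict (\<lambda>i. X i \<omega>) {1..n} \<in> S}"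
    and Da: "\<forall>\<omega>\<in>A. Dseq X n \<omega> = a"
  shows "U.prob (event_eq unit_interval_space (Dseq X (Suc n)) b \<inter> A) = U.prob A * qtr a b"
proof -
  obtain m where m: "n = Suc m" using n by (cases n) auto
  let ?B = "{x. even_round ((a - 1) * (a + 1) / a * exp x) = b}"
  have "event_eq unit_interval_space (Dseq X (Suc n)) b \<inter> A
     = {\<omega>\<in>space unit_interval_space. restrict (\<lambda>i. X i \<omega>) {1..n} \<in> S \<and> X (Suc n) \<omega> \<in> ?B}"
    using Da unfolding A event_eq_def m by auto
  then have "U.prob (event_eq unit_interval_space (Dseq X (Suc n)) b \<inter> A)
     = U.prob A * U.prob {\<omega>\<in>space unit_interval_space. X (Suc n) \<omega> \<in> ?B}"
    using indep_key[OF S, of ?B] A by simp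
  also have "U.prob {\<omega>\<in>space unit_interval_space. X (Suc n) \<omega> \<in> ?B} = qtr a b"
    unfolding qtr_def by (rule probX) auto
  finally show ?thesis .
qed

lemma cyl_sets:
  "{x\<in>space (PiM {1..n} (\<lambda>_. borel)). \<forall>i\<in>{1..n}. Fv i x = s i} \<in> sets (PiM {1..n} (\<lambda>_. borel))"
proof (rule sets.sets_Collect_finite_All)
  fix i assume "i \<in> {1..n}"
  then have [measurable]: "Fv i \<in> borel_measurable (PiM {1..n} (\<lambda>_. borel))"
    by (intro Fv_meas) auto
  show "{x\<in>space (PiM {1..n} (\<lambda>_. borel)). Fv i x = s i} \<in> sets (PiM {1..n} (\<lambda>_. borel))"
    by measurable
qed auto

lemma eq_sets:
  "{x\<in>space (PiM {1..n} (\<lambda>_. borel)). Fv n x = a} \<in> sets (PiM {1..n} (\<lambda>_. borel))"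
proof -
  have [measurable]: "Fv n \<in> borel_measurable (PiM {1..n} (\<lambda>_. borel))"
    by (intro Fv_meas) auto
  show ?thesis by measurable
qed

lemma cyl_eq: "{\<omega>\<in>space unit_interval_space. \<forall>i\<in>{1..n}. Dseq X i \<omega> = s i}
  = {\<omega>\<in>space unit_interval_space. restrict (\<lambda>i. X i \<omega>) {1..n} \<in>
      {x\<in>space (PiM {1..n} (\<lambda>_. borel)). \<forall>i\<in>{1..n}. Fv i x = s i}}"
  using Dseq_Fv[of _ n X] by (auto simp: space_PiM)

lemma ev_eq: "event_eq unit_interval_space (Dseq X n) a
  = {\<omega>\<in>space unit_interval_space. restrict (\<lambda>i. X i \<omega>) {1..n} \<in>
      {x\<in>space (PiM {1..n} (\<lambda>_. borel)). Fv n x = a}}"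
  using Dseq_Fv[of n n X] by (auto simp: space_PiM event_eq_def)

lemma ev_trans:
  assumes "n \<ge> 1"
  shows "U.prob (event_eq unit_interval_space (Dseq X (Suc n)) b \<inter> event_eq unit_interval_space (Dseq X n) a)
    = U.prob (event_eq unit_interval_space (Dseq X n) a) * qtr a b"
  by (rule trans_step[OF assms eq_sets ev_eq]) (auto simp: event_eq_def)

lemma cyl_trans:
  assumes "n \<ge> 1"
  shows "U.prob (event_eq unit_interval_space (Dseq X (Suc n)) b \<inter> {\<omega>\<in>space unit_interval_space. \<forall>i\<in>{1..n}. Dseq X i \<omega> = s i})
    = U.prob {\<omega>\<in>space unit_interval_space. \<forall>i\<in>{1..n}. Dseq X i \<omega> = s i} * qtr (s n) b"
  by (rule trans_step[OF assms cyl_sets cyl_eq]) (use assms in auto)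

lemma ev_cprob:
  assumes "n \<ge> 1" "U.prob (event_eq unit_interval_space (Dseq X n) a) > 0"
  shows "cprob unit_interval_space (event_eq unit_interval_space (Dseq X (Suc n)) b) (event_eq unit_interval_space (Dseq X n) a) = qtr a b"
  using ev_trans[OF assms(1), of b a] assms(2) by (simp add: cprob_def)

lemma markov: "time_homogeneous_markov_chain unit_interval_space (Dseq X)"
  unfolding time_homogeneous_markov_chain_def
proof (intro conjI allI impI)
  fix n :: nat show "Dseq X n \<in> borel_measurable unit_interval_space" by (rule Dmeas)
next
  fix n :: nat and s :: "nat \<Rightarrow> real"
  assume n: "1 \<le> n"
  let ?A = "{\<omega>\<in>space unit_interval_space. \<forall>i\<in>{1..n}. Dseq X i \<omega> = s i}"
  let ?E = "event_eq unit_interval_space (Dseq X n) (s n)"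
  assume pos: "0 < U.prob ?A"
  have "?A \<subseteq> ?E" using n by (auto simp: event_eq_def)
  moreover have "?E \<in> U.events"
    unfolding event_eq_def using Dmeas[of n] by measurable
  ultimately have "U.prob ?A \<le> U.prob ?E" by (intro U.finite_measure_mono)
  with pos have posE: "0 < U.prob ?E" by simp
  show "cprob unit_interval_space (event_eq unit_interval_space (Dseq X (Suc n)) (s (Suc n))) ?A
    = cprob unit_interval_space (event_eq unit_interval_space (Dseq X (Suc n)) (s (Suc n))) ?E"
    using ev_cprob[OF n posE] cyl_trans[OF n, of "s (Suc n)" s] pos by (simp add: cprob_def)
next
  show "\<exists>P. \<forall>n\<ge>1. \<forall>a b. 0 < U.prob (event_eq unit_interval_space (Dseq X n) a) \<longrightarrow>
      cprob unit_interval_space (event_eq unit_interval_space (Dseq X (Suc n)) b) (event_eq unit_interval_space (Dseq X n) a) = P a b"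
    using ev_cprob by blast
qed

lemma ev_events: "event_eq unit_interval_space (Dseq X n) a \<in> U.events"
  unfolding event_eq_def using Dmeas[of n] by measurable

lemma D1_prob:
  assumes k: "k \<ge> 1"
  shows "U.prob (event_eq unit_interval_space (Dseq X 1) (2 * real k)) = 2 / ((2 * real k - 1) * (2 * real k + 1))"
proof -
  have "event_eq unit_interval_space (Dseq X 1) (2 * real k)
     = {\<omega>\<in>space unit_interval_space. X 1 \<omega> \<in> {x. even_round (exp x) = 2 * real k}}"
    by (simp add: event_eq_def)
  also have "U.prob \<dots> = measure mu {x. even_round (exp x) = 2 * real k}"
    by (rule probX) auto
  finally show ?thesis using first_prob[OF k] by simp
qed

lemma pos_prob:
  assumes n: "n \<ge> 1" and k: "k \<ge> 1"
  shows "U.prob (event_eq unit_interval_space (Dseq X n) (2 * real k)) > 0"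
  using n
proof (induction n rule: nat_induct_at_least)
  case base
  have "2 * real k - 1 > 0" using k by simp
  then show ?case unfolding D1_prob[OF k] by simp
next
  case (Suc n)
  let ?E = "event_eq unit_interval_space (Dseq X n) (2 * real k)"
  let ?F = "event_eq unit_interval_space (Dseq X (Suc n)) (2 * real k)"
  have "U.prob (?F \<inter> ?E) = U.prob ?E * qtr (2 * real k) (2 * real k)"
    by (rule ev_trans) fact
  also have "\<dots> = U.prob ?E / (2 * real k)"
    using qtr_val[OF k order_refl] by simp
  also have "\<dots> > 0" using Suc.IH k by simp
  finally have "0 < U.prob (?F \<inter> ?E)" .
  also have "U.prob (?F \<inter> ?E) \<le> U.prob ?F"
    by (intro U.finite_measure_mono ev_events) auto
  finally show ?case .
qed

lemma main:
  "time_homogeneous_markov_chain unit_interval_space (Dseq X)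
    \<and> (\<forall>k::nat. k \<ge> 1 \<longrightarrow>
         measure unit_interval_space (event_eq unit_interval_space (Dseq X 1) (2 * real k))
           = 2 / ((2 * real k - 1) * (2 * real k + 1)))
    \<and> (\<forall>n::nat. \<forall>k::nat. \<forall>l::nat. n \<ge> 1 \<longrightarrow> k \<ge> 1 \<longrightarrow> l \<ge> k \<longrightarrow>
         cprob unit_interval_space (event_eq unit_interval_space (Dseq X (Suc n)) (2 * real l))
                                   (event_eq unit_interval_space (Dseq X n) (2 * real k))
           = (if l = k then 1 / (2 * real k)
              else (2 * real k - 1) * (2 * real k + 1) / (real k * (2 * real l - 1) * (2 * real l + 1))))"
  using markov D1_prob ev_cprob[OF _ pos_prob] qtr_val by auto

end

theorem lemma3p1:
  fixes X :: "nat \<Rightarrow> real \<Rightarrow> real"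
  assumes indep: "prob_space.indep_vars unit_interval_space (\<lambda>_. borel) X {1..}"
    and expo: "\<And>i. i \<ge> 1 \<Longrightarrow> distributed unit_interval_space lborel (X i) (exponential_density 1)"
  shows "time_homogeneous_markov_chain unit_interval_space (Dseq X)
    \<and> (\<forall>k::nat. k \<ge> 1 \<longrightarrow>
         measure unit_interval_space (event_eq unit_interval_space (Dseq X 1) (2 * real k))
           = 2 / ((2 * real k - 1) * (2 * real k + 1)))
    \<and> (\<forall>n::nat. \<forall>k::nat. \<forall>l::nat. n \<ge> 1 \<longrightarrow> k \<ge> 1 \<longrightarrow> l \<ge> k \<longrightarrow>
         cprob unit_interval_space (event_eq unit_interval_space (Dseq X (Suc n)) (2 * real l))
                                   (event_eq unit_interval_space (Dseq X n) (2 * real k))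
           = (if l = k then 1 / (2 * real k)
              else (2 * real k - 1) * (2 * real k + 1) / (real k * (2 * real l - 1) * (2 * real l + 1))))"
  using main[OF indep expo] by blast

end
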